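(* Let $r_k$, $k\in\mathbb N$, be real polynomials of degree $k$ with $r_k(\lambda)=1-\lambda g_k(\lambda)$, $g_k$ a polynomial, such that $|r_k(\lambda)|\le\kappa_0$ (with $\kappa_0\ge1$) and $|\lambda r_k(\lambda)|\le\kappa_2(k+1)^{-2}$ for all $\lambda\in[0,1]$, $k\in\mathbb N$. Then for all $\lambda,\tau\in[0,1]$ and $k\in\mathbb N$, $$|\lambda(r_k(\lambda)-r_k(\tau))|\le(\kappa_0+2\kappa_2)|\lambda-\tau|,\qquad \sqrt\lambda\,|r_k(\lambda)-r_k(\tau)|\le2\kappa_0\sqrt{\tfrac12+\tfrac{\kappa_2}{\kappa_0}}\;k\,|\lambda-\tau|.$$ *)

theory Defs
  imports "HOL-Computational_Algebra.Polynomial"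
begin

end

theory Submission
  imports Defs
begin


fun cheb :: "nat \<Rightarrow> real poly" where
  "cheb 0 = 1"
| "cheb (Suc 0) = [:0, 1:]"
| "cheb (Suc (Suc n)) = [:0, 2:] * cheb (Suc n) - cheb n"

lemma cheb_cos: "poly (cheb n) (cos t) = cos (real n * t)"
proof (induction n rule: cheb.induct)
  case (3 n)
  have "cos (real (Suc (Suc n)) * t) = cos (real (Suc n) * t + t)" by (simp add: algebra_simps)
  also have "\<dots> = 2 * cos t * cos (real (Suc n) * t) - cos (real (Suc n) * t - t)"
    by (simp add: cos_add cos_diff)
  also have "real (Suc n) * t - t = real n * t" by (simp add: algebra_simps)
  finally show ?case using 3 by simp
qed auto

lemma cheb_deg_coeff: "degree (cheb n) = n \<and> coeff (cheb n) n = (if n = 0 then 1 else 2^(n-1))"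
proof (induction n rule: cheb.induct)
  case (3 n)
  have d1: "degree ([:0, 2:] * cheb (Suc n)) = Suc (Suc n)"
    using 3 by (subst degree_mult_eq) auto
  have d2: "degree (cheb n) < Suc (Suc n)" using 3 by simp
  have "degree (cheb (Suc (Suc n))) = Suc (Suc n)"
    using d1 d2 degree_add_eq_left[of "- cheb n" "[:0, 2:] * cheb (Suc n)"] by simp
  moreover have "coeff ([:0, 2:] * cheb (Suc n)) (Suc (Suc n)) = 2 * 2^n"
    using 3 by simp
  moreover have "coeff (cheb n) (Suc (Suc n)) = 0" using 3 by (simp add: coeff_eq_0)
  ultimately show ?case by simp
qed auto

lemma cheb_at1: "poly (cheb n) 1 = 1 \<and> poly (pderiv (cheb n)) 1 = real n ^ 2"
proof (induction n rule: cheb.induct)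
  case (3 n)
  then show ?case by (simp add: pderiv_mult pderiv_diff pderiv_pCons pderiv_smult power2_eq_square algebra_simps)
qed (auto simp: pderiv_pCons)

lemma cheb_deriv_cos: "poly (pderiv (cheb n)) (cos t) * sin t = real n * sin (real n * t)"
proof -
  have d1: "((\<lambda>t. poly (cheb n) (cos t)) has_real_derivative poly (pderiv (cheb n)) (cos t) * (- sin t)) (at t)"
    by (rule DERIV_chain2[OF poly_DERIV DERIV_cos])
  have d2: "((\<lambda>t. cos (real n * t)) has_real_derivative (- sin (real n * t)) * real n) (at t)"
    by (rule DERIV_chain2[OF DERIV_cos]) (auto intro!: derivative_eq_intros)
  have "(\<lambda>t. poly (cheb n) (cos t)) = (\<lambda>t. cos (real n * t))" by (simp add: cheb_cos)
  with d1 d2 have "poly (pderiv (cheb n)) (cos t) * (- sin t) = (- sin (real n * t)) * real n"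
    using DERIV_unique by metis
  thus ?thesis by simp
qed


definition theta :: "nat \<Rightarrow> nat \<Rightarrow> real" where
  "theta n k = (2 * real k + 1) * pi / (2 * real n)"

definition node :: "nat \<Rightarrow> nat \<Rightarrow> real" where
  "node n k = cos (theta n k)"

definition omega :: "nat \<Rightarrow> real poly" where
  "omega n = (\<Prod>i<n. [:- node n i, 1:])"

lemma theta_range: assumes "k < n" shows "0 < theta n k" "theta n k < pi"
proof -
  have n: "real n > 0" using assms by simp
  show "0 < theta n k" unfolding theta_def using n by (simp add: pi_gt_zero)
  have "2 * real k + 1 < 2 * real n" using assms by linarith
  hence "(2 * real k + 1) * pi < 2 * real n * pi" using pi_gt_zero by simp
  thus "theta n k < pi" unfolding theta_def using n by (simp add: divide_less_eq)
qed

lemma theta_mono: assumes "j \<le> k" "0 < n" shows "theta n j \<le> theta n k"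
  unfolding theta_def using assms pi_gt_zero
  by (intro divide_right_mono mult_right_mono) auto

lemma node_inj: assumes "i < n" "j < n" "node n i = node n j" shows "i = j"
proof -
  have c: "cos (theta n i) = cos (theta n j)" using assms(3) unfolding node_def .
  have "theta n i = theta n j"
    using cos_inj_pi[OF _ _ _ _ c] theta_range[OF assms(1)] theta_range[OF assms(2)] by linarith
  hence "(2 * real i + 1) * pi = (2 * real j + 1) * pi" unfolding theta_def
    using assms by (simp add: divide_cancel_right)
  hence "2 * real i + 1 = 2 * real j + 1" using pi_gt_zero by simp
  thus ?thesis by simp
qed

lemma node_le0: assumes "k < n" shows "node n k \<le> node n 0"
  unfolding node_def using assms theta_range[of k n] theta_range[of 0 n] theta_mono[of 0 k n]
  by (subst cos_mono_le_eq) auto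

lemma sin_theta_pos: "k < n \<Longrightarrow> sin (theta n k) > 0"
  using theta_range[of k n] by (intro sin_gt_zero) auto

lemma cos_ntheta: assumes "k < n" shows "cos (real n * theta n k) = 0"
proof -
  have "real n * theta n k = real (2*k+1) * (pi/2)"
    unfolding theta_def using assms by (simp add: field_simps)
  moreover have "cos (real (2*k+1) * (pi/2)) = 0"
    by (subst cos_zero_iff, rule disjI1, rule exI[of _ "2*k+1"]) simp
  ultimately show ?thesis by (simp only:)
qed

lemma abs_sin_ntheta: assumes "k < n" shows "\<bar>sin (real n * theta n k)\<bar> = 1"
proof -
  have "sin (real n * theta n k) ^ 2 = 1" using sin_cos_squared_add[of "real n * theta n k"] cos_ntheta[OF assms] by simp
  thus ?thesis by (simp add: abs_square_eq_1)
qed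

lemma cheb_node: "k < n \<Longrightarrow> poly (cheb n) (node n k) = 0"
  unfolding node_def by (simp add: cheb_cos cos_ntheta)

lemma omega_deg: "degree (omega n) = n" and omega_coeff: "coeff (omega n) n = 1"
proof -
  have "degree (omega n) = (\<Sum>i<n. degree [:- node n i, 1:])"
    unfolding omega_def by (rule degree_prod_eq_sum_degree) auto
  thus d: "degree (omega n) = n" by simp
  have "lead_coeff (omega n) = 1" unfolding omega_def by (simp add: lead_coeff_prod)
  thus "coeff (omega n) n = 1" using d by simp
qed

lemma poly_omega: "poly (omega n) x = (\<Prod>i<n. (x - node n i))"
  unfolding omega_def by (simp add: poly_prod)

lemma card_nodes: "card (node n ` {..<n}) = n"
  by (subst card_image) (auto intro!: inj_onI node_inj)

lemma cheb_omega: assumes "n > 0" shows "cheb n = smult (2^(n-1)) (omega n)"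
proof (rule poly_eqI_degree_lead_coeff[where n = n and A = "node n ` {..<n}"])
  show "coeff (cheb n) n = coeff (smult (2 ^ (n - 1)) (omega n)) n"
    using cheb_deg_coeff[of n] omega_coeff[of n] assms by simp
  show "n \<le> card (node n ` {..<n})" by (simp add: card_nodes)
  show "degree (cheb n) \<le> n" using cheb_deg_coeff[of n] by simp
  show "degree (smult (2 ^ (n - 1)) (omega n)) \<le> n" using omega_deg[of n] by simp
  fix z assume "z \<in> node n ` {..<n}"
  then obtain k where k: "k < n" "z = node n k" by auto
  have "poly (omega n) z = 0" unfolding poly_omega k(2) using k(1) by (intro prod_zero) auto
  thus "poly (cheb n) z = poly (smult (2 ^ (n - 1)) (omega n)) z" using k cheb_node by simp
qed



lemma lagrange:
  fixes x :: "nat \<Rightarrow> real" and B :: "real poly"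
  assumes inj: "\<And>i j. i < n \<Longrightarrow> j < n \<Longrightarrow> x i = x j \<Longrightarrow> i = j" and deg: "degree B < n"
  shows "poly B y = (\<Sum>k<n. poly B (x k) * (\<Prod>i\<in>{..<n}-{k}. (y - x i)) / (\<Prod>i\<in>{..<n}-{k}. (x k - x i)))"
proof -
  define P where "P = (\<Sum>k<n. smult (poly B (x k) / (\<Prod>i\<in>{..<n}-{k}. (x k - x i))) (\<Prod>i\<in>{..<n}-{k}. [:- x i, 1:]))"
  have n: "n > 0" using deg by simp
  have degP: "degree P \<le> n - 1" unfolding P_def
  proof (intro degree_sum_le, simp)
    fix k assume k: "k \<in> {..<n}"
    have "degree (\<Prod>i\<in>{..<n}-{k}. [:- x i, 1:]) \<le> (\<Sum>i\<in>{..<n}-{k}. degree [:- x i, 1:])"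
      using degree_prod_sum_le[of "{..<n}-{k}" "\<lambda>i. [:- x i, 1:]"] by (simp add: o_def)
    also have "\<dots> = n - 1" using k by simp
    finally show "degree (smult (poly B (x k) / (\<Prod>i\<in>{..<n}-{k}. (x k - x i))) (\<Prod>i\<in>{..<n}-{k}. [:- x i, 1:])) \<le> n - 1"
      by (meson degree_smult_le order_trans)
  qed
  have evalP: "poly P z = (\<Sum>k<n. poly B (x k) * (\<Prod>i\<in>{..<n}-{k}. (z - x i)) / (\<Prod>i\<in>{..<n}-{k}. (x k - x i)))" for z
    unfolding P_def by (simp add: poly_sum poly_prod)
  have BP: "B = P"
  proof (rule poly_eqI_degree[where A = "x ` {..<n}"])
    have "inj_on x {..<n}" unfolding inj_on_def using inj by blast
    hence card: "card (x ` {..<n}) = n" by (simp add: card_image)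
    show "degree B < card (x ` {..<n})" using card deg by simp
    show "degree P < card (x ` {..<n})" using card degP n by simp
    fix z assume "z \<in> x ` {..<n}"
    then obtain j where j: "j < n" "z = x j" by auto
    have nz: "(\<Prod>i\<in>{..<n}-{j}. (x j - x i)) \<noteq> 0"
    proof
      assume "(\<Prod>i\<in>{..<n}-{j}. (x j - x i)) = 0"
      then obtain i where "i \<in> {..<n}-{j}" "x j - x i = 0" by (auto simp: prod_zero_iff)
      thus False using inj[of i j] j(1) by auto
    qed
    have "poly P z = (\<Sum>k\<in>{j}. poly B (x k) * (\<Prod>i\<in>{..<n}-{k}. (z - x i)) / (\<Prod>i\<in>{..<n}-{k}. (x k - x i)))"
      unfolding evalP
    proof (rule sum.mono_neutral_right)
      show "\<forall>k\<in>{..<n} - {j}. poly B (x k) * (\<Prod>i\<in>{..<n}-{k}. (z - x i)) / (\<Prod>i\<in>{..<n}-{k}. (x k - x i)) = 0"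
      proof
        fix k assume k: "k \<in> {..<n} - {j}"
        hence "j \<in> {..<n}-{k}" using j by auto
        hence "(\<Prod>i\<in>{..<n}-{k}. (z - x i)) = 0" using j(2) by (intro prod_zero) auto
        thus "poly B (x k) * (\<Prod>i\<in>{..<n}-{k}. (z - x i)) / (\<Prod>i\<in>{..<n}-{k}. (x k - x i)) = 0" by simp
      qed
    qed (use j in auto)
    also have "\<dots> = poly B z" using nz j by simp
    finally show "poly B z = poly P z" by simp
  qed
  have "poly B y = poly P y" by (simp only: BP)
  thus ?thesis by (simp only: evalP)
qed



abbreviation LL :: "nat \<Rightarrow> nat \<Rightarrow> real \<Rightarrow> real" where
  "LL n k z \<equiv> (\<Prod>i\<in>{..<n}-{k}. (z - node n i))"

lemma poly_pderiv_omega: "poly (pderiv (omega n)) z = (\<Sum>k<n. LL n k z)"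
  unfolding omega_def pderiv_prod by (simp add: poly_sum poly_prod pderiv_pCons)

lemma pderiv_omega_node: assumes "k < n" shows "poly (pderiv (omega n)) (node n k) = LL n k (node n k)"
proof -
  have "(\<Sum>j<n. LL n j (node n k)) = (\<Sum>j\<in>{k}. LL n j (node n k))"
  proof (rule sum.mono_neutral_right)
    show "\<forall>j\<in>{..<n} - {k}. LL n j (node n k) = 0"
    proof
      fix j assume j: "j \<in> {..<n} - {k}"
      hence "k \<in> {..<n}-{j}" using assms by auto
      thus "LL n j (node n k) = 0" by (intro prod_zero) auto
    qed
  qed (use assms in auto)
  thus ?thesis by (simp add: poly_pderiv_omega)
qed

lemma abs_LL_node: assumes "k < n"
  shows "2^(n-1) * \<bar>LL n k (node n k)\<bar> * sin (theta n k) = real n"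
proof -
  have n: "n > 0" using assms by simp
  have "poly (pderiv (cheb n)) (node n k) = 2^(n-1) * LL n k (node n k)"
    using cheb_omega[OF n] pderiv_omega_node[OF assms] by (simp add: pderiv_smult)
  moreover have "poly (pderiv (cheb n)) (node n k) * sin (theta n k) = real n * sin (real n * theta n k)"
    unfolding node_def by (rule cheb_deriv_cos)
  ultimately have "2^(n-1) * LL n k (node n k) * sin (theta n k) = real n * sin (real n * theta n k)"
    by simp
  hence "\<bar>2^(n-1) * LL n k (node n k) * sin (theta n k)\<bar> = real n"
    using abs_sin_ntheta[OF assms] by (simp add: abs_mult)
  thus ?thesis using sin_theta_pos[OF assms] by (simp add: abs_mult)
qed

lemma sum_LL_1: assumes "n > 0" shows "2^(n-1) * (\<Sum>k<n. LL n k 1) = real n ^ 2"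
proof -
  have "poly (pderiv (cheb n)) 1 = 2^(n-1) * poly (pderiv (omega n)) 1"
    using cheb_omega[OF assms] by (simp add: pderiv_smult)
  thus ?thesis using cheb_at1[of n] by (simp add: poly_pderiv_omega)
qed

lemma sqrt_node: "k < n \<Longrightarrow> sqrt (1 - node n k ^ 2) = sin (theta n k)"
  unfolding node_def using sin_theta_pos[of k n] sin_cos_sqrt[of "theta n k"] by simp

lemma node_range: "k < n \<Longrightarrow> node n k \<in> {-1..1}"
  unfolding node_def by simp

lemma schur_right:
  fixes B :: "real poly"
  assumes n: "n > 0" "degree B < n"
    and hyp: "\<And>c. c \<in> {-1..1} \<Longrightarrow> sqrt (1 - c^2) * \<bar>poly B c\<bar> \<le> M"
    and y: "node n 0 \<le> y" "y \<le> 1"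
  shows "\<bar>poly B y\<bar> \<le> real n * M"
proof -
  define c :: real where "c = 2^(n-1)"
  have c: "c > 0" unfolding c_def by simp
  have interp: "poly B y = (\<Sum>k<n. poly B (node n k) * LL n k y / LL n k (node n k))"
    by (rule lagrange) (auto intro: node_inj n)
  have LLy: "0 \<le> LL n k y \<and> LL n k y \<le> LL n k 1" for k
  proof -
    have f: "\<And>i. i \<in> {..<n}-{k} \<Longrightarrow> 0 \<le> y - node n i \<and> y - node n i \<le> 1 - node n i"
      using node_le0 y by fastforce
    have "0 \<le> LL n k y" by (rule prod_nonneg) (use f in blast)
    moreover have "LL n k y \<le> LL n k 1" by (rule prod_mono) (use f in blast)
    ultimately show ?thesis by blast
  qed
  have tm: "\<bar>poly B (node n k) * LL n k y / LL n k (node n k)\<bar> \<le> M * c / real n * LL n k 1"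
    if k: "k < n" for k
  proof -
    have s: "sin (theta n k) > 0" using sin_theta_pos[OF k] .
    have hb: "sin (theta n k) * \<bar>poly B (node n k)\<bar> \<le> M"
      using hyp[OF node_range[OF k]] sqrt_node[OF k] by simp
    have L: "c * \<bar>LL n k (node n k)\<bar> * sin (theta n k) = real n"
      using abs_LL_node[OF k] unfolding c_def .
    have Lpos: "\<bar>LL n k (node n k)\<bar> > 0" using L n(1) by (cases "LL n k (node n k) = 0") auto
    have "\<bar>poly B (node n k) * LL n k y / LL n k (node n k)\<bar>
        = \<bar>poly B (node n k)\<bar> * LL n k y / \<bar>LL n k (node n k)\<bar>"
      using LLy[of k] by (simp add: abs_mult)
    also have "\<dots> = (sin (theta n k) * \<bar>poly B (node n k)\<bar>) * LL n k y * c / real n"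
      using L Lpos s n(1) by (simp add: field_simps)
    also have "\<dots> \<le> M * LL n k y * c / real n"
      using hb LLy[of k] c n(1) by (intro divide_right_mono mult_right_mono) auto
    also have "\<dots> \<le> M * LL n k 1 * c / real n"
    proof -
      have M0: "M \<ge> 0" using hyp[of 0] by simp
      show ?thesis using LLy[of k] M0 c n(1) by (intro divide_right_mono mult_right_mono mult_left_mono) auto
    qed
    finally show ?thesis by (simp add: field_simps)
  qed
  have "\<bar>poly B y\<bar> \<le> (\<Sum>k<n. \<bar>poly B (node n k) * LL n k y / LL n k (node n k)\<bar>)"
    unfolding interp by (rule sum_abs)
  also have "\<dots> \<le> (\<Sum>k<n. M * c / real n * LL n k 1)"
    by (rule sum_mono) (use tm in auto)
  also have "\<dots> = M / real n * (c * (\<Sum>k<n. LL n k 1))"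
    by (simp add: sum_distrib_left sum_divide_distrib mult.assoc)
  also have "\<dots> = real n * M"
    using sum_LL_1[OF n(1)] n(1) unfolding c_def by (simp add: power2_eq_square)
  finally show ?thesis .
qed



lemma pi_gt_254: "pi > 254/100"
proof -
  define a :: real where "a = 127/100"
  obtain t where t: "cos a = (\<Sum>m<4. cos_coeff m * a^m) + (cos (t + 1/2 * real 4 * pi) / fact 4) * a^4"
    using Maclaurin_cos_expansion by blast
  have s: "(\<Sum>m<4. cos_coeff m * a^m) = 1 - a^2/2"
    by (simp add: cos_coeff_def lessThan_nat_numeral fact_numeral)
  have "(cos (t + 1/2 * real 4 * pi) / fact 4) * a^4 \<ge> - (a^4 / 24)"
  proof -
    have "cos (t + 1/2 * real 4 * pi) \<ge> -1" by simp
    hence "cos (t + 1/2 * real 4 * pi) * a^4 \<ge> -1 * a^4" by (intro mult_right_mono) auto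
    thus ?thesis by (simp add: fact_numeral)
  qed
  hence "cos a \<ge> 1 - a^2/2 - a^4/24" using t s by linarith
  moreover have "1 - a^2/2 - a^4/24 > 0" unfolding a_def by (simp add: power_numeral_reduce power2_eq_square)
  ultimately have ca: "cos a > 0" by linarith
  show ?thesis
  proof (rule ccontr)
    assume "\<not> pi > 254/100"
    hence "pi / 2 \<le> a" unfolding a_def by simp
    hence "cos a \<le> cos (pi/2)" using pi_ge_two unfolding a_def by (subst cos_mono_le_eq) auto
    thus False using ca by simp
  qed
qed

lemma sin_lower: assumes "n > 0" shows "sin (pi / (2 * real n)) \<ge> 1 / real n"
proof (cases "n = 1")
  case True thus ?thesis by simp
next
  case False
  hence n2: "real n \<ge> 2" using assms by linarith
  define x where "x = pi / (2 * real n)"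
  have x0: "x > 0" unfolding x_def using assms by simp
  have "x \<le> pi / 4" unfolding x_def using n2 pi_gt_zero by (intro divide_left_mono) auto
  hence x1: "x \<le> 1" using pi_less_4 by linarith
  have "\<bar>sin x - (\<Sum>m<4. sin_coeff m * x ^ m)\<bar> \<le> inverse (fact 4) * \<bar>x\<bar> ^ 4"
    by (rule Maclaurin_sin_bound)
  moreover have "(\<Sum>m<4. sin_coeff m * x ^ m) = x - x^3 / 6"
    by (simp add: sin_coeff_def lessThan_nat_numeral fact_numeral)
  ultimately have "\<bar>sin x - (x - x^3/6)\<bar> * 24 \<le> x^4" using x0 by (simp add: fact_numeral)
  hence "sin x \<ge> x - x^3/6 - x^4/24"
  proof -
    assume h: "\<bar>sin x - (x - x^3/6)\<bar> * 24 \<le> x^4"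
    define e where "e = sin x - (x - x^3/6)"
    have e1: "sin x = x - x^3/6 + e" unfolding e_def by simp
    have e2: "- e * 24 \<le> x^4" using h abs_ge_minus_self[of e] unfolding e_def[symmetric] by linarith
    show ?thesis using e1 e2 by linarith
  qed
  moreover have "x^3 \<le> x" using x0 x1 by (simp add: power_le_one mult_le_one power3_eq_cube)
  moreover have "x^4 \<le> x" using x0 x1
    using power_decreasing[of 1 4 x] by simp
  ultimately have "sin x \<ge> x * (19/24)" by linarith
  moreover have "1 / real n = x * (2 / pi)" unfolding x_def using assms by (simp add: field_simps)
  moreover have "2 / pi \<le> 19/24" using pi_gt_254 by (simp add: divide_le_eq)
  ultimately show ?thesis unfolding x_def[symmetric] using x0
    by (metis mult_left_mono less_imp_le order_trans)
qed

lemma node0: "node n 0 = cos (pi / (2 * real n))"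
  unfolding node_def theta_def by simp

lemma schur:
  fixes B :: "real poly"
  assumes n: "n > 0" "degree B < n"
    and hyp: "\<And>c. c \<in> {-1..1} \<Longrightarrow> sqrt (1 - c^2) * \<bar>poly B c\<bar> \<le> M"
    and y: "y \<in> {-1..1}"
  shows "\<bar>poly B y\<bar> \<le> real n * M"
proof -
  consider "node n 0 \<le> y" | "y \<le> - node n 0" | "\<bar>y\<bar> \<le> node n 0" by linarith
  thus ?thesis
  proof cases
    case 1 thus ?thesis using schur_right[OF n hyp] y by auto
  next
    case 2
    define B' where "B' = pcompose B [:0, -1:]"
    have pB': "poly B' z = poly B (- z)" for z unfolding B'_def by (simp add: poly_pcompose)
    have dB': "degree B' < n" unfolding B'_def using n by (simp add: degree_pcompose)
    have hyp': "sqrt (1 - c^2) * \<bar>poly B' c\<bar> \<le> M" if "c \<in> {-1..1}" for c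
      using hyp[of "-c"] that by (simp add: pB')
    have "\<bar>poly B' (-y)\<bar> \<le> real n * M" using schur_right[OF n(1) dB' hyp', of "-y"] 2 y by auto
    thus ?thesis by (simp add: pB')
  next
    case 3
    have s: "sin (pi / (2 * real n)) \<ge> 1 / real n" by (rule sin_lower[OF n(1)])
    have "y^2 \<le> (cos (pi / (2 * real n)))^2" using 3 unfolding node0
      by (metis abs_le_square_iff abs_of_nonneg abs_ge_zero order_trans)
    hence "1 - y^2 \<ge> (sin (pi / (2 * real n)))^2" using sin_cos_squared_add[of "pi / (2 * real n)"] by linarith
    moreover have "(sin (pi / (2 * real n)))^2 \<ge> (1 / real n)^2"
      using s n(1) by (intro power_mono) auto
    ultimately have "1 - y^2 \<ge> (1 / real n)^2" by linarith
    hence sq: "sqrt (1 - y^2) \<ge> 1 / real n" using n(1) by (metis real_le_rsqrt)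
    have "(1 / real n) * \<bar>poly B y\<bar> \<le> sqrt (1 - y^2) * \<bar>poly B y\<bar>"
      using sq by (intro mult_right_mono) auto
    also have "\<dots> \<le> M" by (rule hyp[OF y])
    finally show ?thesis using n(1) by (simp add: field_simps)
  qed
qed



lemma decomp:
  fixes p :: "real poly" and a b :: real
  shows "\<exists>A B. degree A \<le> degree p \<and> (B = 0 \<or> degree B < degree p) \<and>
    (\<forall>c s. s^2 = 1 - c^2 \<longrightarrow> poly p (a*c - b*s) = poly A c + s * poly B c) \<and>
    poly B 1 = - b * poly (pderiv p) a"
proof (induction p)
  case 0
  show ?case by (rule exI[of _ 0], rule exI[of _ 0]) simp
next
  case (pCons a0 p1)
  show ?case
  proof (cases "p1 = 0")
    case True
    show ?thesis by (rule exI[of _ "[:a0:]"], rule exI[of _ 0]) (simp add: True)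
  next
    case False
    from pCons.IH obtain A1 B1 where
      dA1: "degree A1 \<le> degree p1" and dB1: "B1 = 0 \<or> degree B1 < degree p1" and
      id1: "\<forall>c s. s^2 = 1 - c^2 \<longrightarrow> poly p1 (a*c - b*s) = poly A1 c + s * poly B1 c" and
      B11: "poly B1 1 = - b * poly (pderiv p1) a" by blast
    have dp: "degree (pCons a0 p1) = Suc (degree p1)" using False by simp
    define A where "A = [:a0:] + [:0, a:] * A1 - smult b ([:1, 0, -1:] * B1)"
    define B where "B = [:0, a:] * B1 - smult b A1"
    have t1: "degree ([:0, a:] * B1) \<le> degree p1"
    proof (cases "B1 = 0")
      case False
      hence "degree B1 < degree p1" using dB1 by simp
      moreover have "degree ([:0, a:] * B1) \<le> degree [:0, a:] + degree B1" by (rule degree_mult_le)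
      moreover have "degree [:0, a:] \<le> 1" by simp
      ultimately show ?thesis by linarith
    qed simp
    have t2: "degree ([:1, 0, -1:] * B1) \<le> Suc (degree p1)"
    proof (cases "B1 = 0")
      case False
      hence "degree B1 < degree p1" using dB1 by simp
      moreover have "degree ([:1, 0, -1:] * B1) \<le> degree [:1, 0, -1::real:] + degree B1" by (rule degree_mult_le)
      moreover have "degree [:1, 0, -1::real:] \<le> 2" by simp
      ultimately show ?thesis by linarith
    qed simp
    have t3: "degree ([:0, a:] * A1) \<le> Suc (degree p1)"
    proof -
      have "degree ([:0, a:] * A1) \<le> degree [:0, a:] + degree A1" by (rule degree_mult_le)
      moreover have "degree [:0, a:] \<le> 1" by simp
      ultimately show ?thesis using dA1 by linarith
    qed
    have "degree A \<le> Suc (degree p1)" unfolding A_def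
      using t2 t3 by (intro degree_diff_le degree_add_le) (auto intro: order_trans[OF degree_smult_le])
    moreover have "degree B < Suc (degree p1)"
    proof -
      have "degree B \<le> degree p1" unfolding B_def
        using t1 dA1 by (intro degree_diff_le) (auto intro: order_trans[OF degree_smult_le])
      thus ?thesis by simp
    qed
    moreover have "\<forall>c s. s^2 = 1 - c^2 \<longrightarrow> poly (pCons a0 p1) (a*c - b*s) = poly A c + s * poly B c"
    proof (intro allI impI)
      fix c s :: real assume h: "s^2 = 1 - c^2"
      have "poly (pCons a0 p1) (a*c - b*s) = a0 + (a*c - b*s) * (poly A1 c + s * poly B1 c)"
        using id1 h by simp
      also have "\<dots> = a0 + a*c*poly A1 c - b * s^2 * poly B1 c + s * (a*c*poly B1 c - b * poly A1 c)"
        by (simp add: algebra_simps power2_eq_square)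
      also have "\<dots> = poly A c + s * poly B c"
        unfolding A_def B_def h by (simp add: algebra_simps power2_eq_square)
      finally show "poly (pCons a0 p1) (a*c - b*s) = poly A c + s * poly B c" .
    qed
    moreover have "poly B 1 = - b * poly (pderiv (pCons a0 p1)) a"
    proof -
      have "poly A1 1 = poly p1 a" using id1 by (metis diff_zero mult_1_right mult_zero_left mult_zero_right add_0_right power2_eq_square one_power2 diff_self zero_power2)
      thus ?thesis unfolding B_def using B11 by (simp add: pderiv_pCons algebra_simps)
    qed
    ultimately show ?thesis unfolding dp by blast
  qed
qed


lemma unit_circle_bound:
  fixes a b c s :: real
  assumes "a^2 + b^2 = 1" "c^2 + s^2 = 1"
  shows "a*c - b*s \<in> {-1..1}"
proof -
  have "(a*c - b*s)^2 + (a*s + b*c)^2 = (a^2 + b^2) * (c^2 + s^2)" by (simp add: algebra_simps power2_eq_square)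
  hence "(a*c - b*s)^2 + (a*s + b*c)^2 = 1" using assms by simp
  moreover have "(a*s + b*c)^2 \<ge> 0" by simp
  ultimately have "(a*c - b*s)^2 \<le> 1" by linarith
  hence "\<bar>a*c - b*s\<bar> \<le> 1" by (simp add: abs_square_le_1)
  thus ?thesis by auto
qed

lemma bernstein:
  fixes p :: "real poly"
  assumes n: "n > 0" "degree p \<le> n" and bd: "\<And>x. x \<in> {-1..1} \<Longrightarrow> \<bar>poly p x\<bar> \<le> M"
    and a: "a \<in> {-1..1}"
  shows "sqrt (1 - a^2) * \<bar>poly (pderiv p) a\<bar> \<le> real n * M"
proof -
  define b where "b = sqrt (1 - a^2)"
  have a2: "a^2 \<le> 1" using abs_square_le_1[THEN iffD2, of a] a by (auto simp: abs_le_iff)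
  have b0: "b \<ge> 0" unfolding b_def using a2 by simp
  have "(sqrt (1 - a^2))^2 = 1 - a^2" using a2 by (intro real_sqrt_pow2) simp
  hence bb: "a^2 + b^2 = 1" unfolding b_def by simp
  obtain A B where dB: "B = 0 \<or> degree B < degree p"
    and id: "\<forall>c s. s^2 = 1 - c^2 \<longrightarrow> poly p (a*c - b*s) = poly A c + s * poly B c"
    and B1: "poly B 1 = - b * poly (pderiv p) a"
    using decomp[of p a b] by blast
  have dB': "degree B < n" using dB n by auto
  have hyp: "sqrt (1 - c^2) * \<bar>poly B c\<bar> \<le> M" if c: "c \<in> {-1..1}" for c
  proof -
    define s where "s = sqrt (1 - c^2)"
    have c2: "c^2 \<le> 1" using abs_square_le_1[THEN iffD2, of c] c by (auto simp: abs_le_iff)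
    have s0: "s \<ge> 0" unfolding s_def using c2 by simp
    have ss: "s^2 = 1 - c^2" unfolding s_def using c2 by (intro real_sqrt_pow2) simp
    have e1: "poly p (a*c - b*s) = poly A c + s * poly B c" using id ss by blast
    have e2: "poly p (a*c - b*(-s)) = poly A c + (-s) * poly B c" using id ss by (metis power2_minus)
    have i1: "a*c - b*s \<in> {-1..1}" by (rule unit_circle_bound) (use bb ss in auto)
    have i2: "a*c - b*(-s) \<in> {-1..1}" by (rule unit_circle_bound) (use bb ss in auto)
    have "2 * (s * poly B c) = poly p (a*c - b*s) - poly p (a*c - b*(-s))" using e1 e2 by simp
    hence "\<bar>2 * (s * poly B c)\<bar> \<le> 2 * M" using bd[OF i1] bd[OF i2] by linarith
    thus ?thesis using s0 unfolding s_def[symmetric] by (simp add: abs_mult)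
  qed
  have "\<bar>poly B 1\<bar> \<le> real n * M" by (rule schur[OF n(1) dB' hyp]) auto
  thus ?thesis using B1 b0 unfolding b_def[symmetric] by (simp add: abs_mult)
qed

lemma markov:
  fixes p :: "real poly"
  assumes n: "degree p \<le> n" and bd: "\<And>x. x \<in> {-1..1} \<Longrightarrow> \<bar>poly p x\<bar> \<le> M"
    and y: "y \<in> {-1..1}"
  shows "\<bar>poly (pderiv p) y\<bar> \<le> real n ^ 2 * M"
proof (cases "n = 0")
  case True
  hence "pderiv p = 0" using n by (simp add: pderiv_eq_0_iff)
  moreover have "M \<ge> 0" using bd[of 0] by simp
  ultimately show ?thesis by simp
next
  case False
  hence n0: "n > 0" by simp
  have d: "degree (pderiv p) < n" using n n0 by (simp add: degree_pderiv)
  have "\<bar>poly (pderiv p) y\<bar> \<le> real n * (real n * M)"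
    by (rule schur[OF n0 d _ y]) (rule bernstein[OF n0 n bd], auto)
  thus ?thesis by (simp add: power2_eq_square)
qed

lemma markov01:
  fixes p :: "real poly"
  assumes n: "degree p \<le> n" and bd: "\<And>x. x \<in> {0..1} \<Longrightarrow> \<bar>poly p x\<bar> \<le> M"
    and x: "x \<in> {0..1}"
  shows "\<bar>poly (pderiv p) x\<bar> \<le> 2 * real n ^ 2 * M"
proof -
  define q where "q = pcompose p [:1/2, 1/2:]"
  have pq: "poly q y = poly p (1/2 + y/2)" for y unfolding q_def by (simp add: poly_pcompose)
  have dq: "degree q \<le> n" unfolding q_def using n by (simp add: degree_pcompose)
  have pdq: "poly (pderiv q) y = poly (pderiv p) (1/2 + y/2) / 2" for y
    unfolding q_def by (simp add: pderiv_pcompose poly_pcompose pderiv_pCons)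
  have bq: "\<bar>poly q y\<bar> \<le> M" if "y \<in> {-1..1}" for y
    unfolding pq using that by (intro bd) auto
  have "\<bar>poly (pderiv q) (2*x - 1)\<bar> \<le> real n ^ 2 * M"
    by (rule markov[OF dq bq]) (use x in auto)
  moreover have "1 / 2 + (2 * x - 1) / 2 = x" by (simp add: field_simps)
  ultimately show ?thesis unfolding pdq by (simp add: field_simps)
qed

lemma lip01:
  fixes p :: "real poly"
  assumes n: "degree p \<le> n" and bd: "\<And>x. x \<in> {0..1} \<Longrightarrow> \<bar>poly p x\<bar> \<le> M"
    and x: "x \<in> {0..1}" and t: "t \<in> {0..1}"
  shows "\<bar>poly p x - poly p t\<bar> \<le> 2 * real n ^ 2 * M * \<bar>x - t\<bar>"
proof -
  have gen: "\<bar>poly p v - poly p u\<bar> \<le> 2 * real n ^ 2 * M * (v - u)"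
    if uv: "u < v" "u \<in> {0..1}" "v \<in> {0..1}" for u v
  proof -
    obtain z where z: "u < z" "z < v" "poly p v - poly p u = (v - u) * poly (pderiv p) z"
      using poly_MVT[OF uv(1)] by blast
    have "z \<in> {0..1}" using z uv by auto
    hence "\<bar>poly (pderiv p) z\<bar> \<le> 2 * real n ^ 2 * M" using markov01[OF n, of M z] bd by blast
    hence "(v - u) * \<bar>poly (pderiv p) z\<bar> \<le> (v - u) * (2 * real n ^ 2 * M)"
      using uv by (intro mult_left_mono) auto
    thus ?thesis unfolding z(3) using uv by (simp add: abs_mult)
  qed
  consider "x < t" | "x = t" | "t < x" by linarith
  thus ?thesis
  proof cases
    case 1 thus ?thesis using gen[OF 1 x t] by (simp add: abs_minus_commute)
  next
    case 3 thus ?thesis using gen[OF 3 t x] by simp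
  qed simp
qed



theorem lemma2:
  fixes r :: "nat \<Rightarrow> real poly" and \<kappa>0 \<kappa>2 :: real
  assumes deg: "\<And>k. degree (r k) = k"
    and resid: "\<And>k. \<exists>g :: real poly. r k = 1 - [:0, 1:] * g"
    and k0: "\<kappa>0 \<ge> 1"
    and bound0: "\<And>k x. x \<in> {0..1} \<Longrightarrow> \<bar>poly (r k) x\<bar> \<le> \<kappa>0"
    and bound2: "\<And>k x. x \<in> {0..1} \<Longrightarrow> \<bar>x * poly (r k) x\<bar> \<le> \<kappa>2 / (real k + 1)^2"
  shows "\<forall>k. \<forall>x\<in>{0..1}. \<forall>t\<in>{0..1}.
           \<bar>x * (poly (r k) x - poly (r k) t)\<bar> \<le> (\<kappa>0 + 2 * \<kappa>2) * \<bar>x - t\<bar>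
         \<and> sqrt x * \<bar>poly (r k) x - poly (r k) t\<bar>
             \<le> 2 * \<kappa>0 * sqrt (1/2 + \<kappa>2 / \<kappa>0) * real k * \<bar>x - t\<bar>"
proof (intro allI ballI)
  fix k :: nat and x t :: real assume x: "x \<in> {0..1}" and t: "t \<in> {0..1}"
  define D where "D = poly (r k) x - poly (r k) t"
  have k2: "\<kappa>2 \<ge> 0"
  proof -
    have "0 \<le> \<kappa>2 / (real k + 1)^2" using bound2[of 0 k] by simp
    thus ?thesis by (simp add: zero_le_divide_iff)
  qed
  have L1: "\<bar>D\<bar> \<le> 2 * real k ^ 2 * \<kappa>0 * \<bar>x - t\<bar>"
    unfolding D_def by (rule lip01[OF _ bound0 x t]) (simp add: deg)
  define q where "q = [:0, 1:] * r k"
  have pq: "poly q z = z * poly (r k) z" for z unfolding q_def by simp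
  have dq: "degree q \<le> Suc k"
    unfolding q_def using degree_mult_le[of "[:0, 1::real:]" "r k"] deg[of k] by simp
  have "\<bar>poly q x - poly q t\<bar> \<le> 2 * real (Suc k) ^ 2 * (\<kappa>2 / (real k + 1)^2) * \<bar>x - t\<bar>"
    by (rule lip01[OF dq _ x t]) (simp add: pq bound2)
  also have "2 * real (Suc k) ^ 2 * (\<kappa>2 / (real k + 1)^2) = 2 * \<kappa>2"
    by (simp add: field_simps)
  finally have L2: "\<bar>x * poly (r k) x - t * poly (r k) t\<bar> \<le> 2 * \<kappa>2 * \<bar>x - t\<bar>" unfolding pq .
  have rt: "\<bar>poly (r k) t\<bar> \<le> \<kappa>0" using bound0[OF t] .
  have "x * D = (x * poly (r k) x - t * poly (r k) t) - (x - t) * poly (r k) t"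
    unfolding D_def by (simp add: algebra_simps)
  hence "\<bar>x * D\<bar> \<le> \<bar>x * poly (r k) x - t * poly (r k) t\<bar> + \<bar>x - t\<bar> * \<bar>poly (r k) t\<bar>"
    by (simp add: abs_mult[symmetric] abs_triangle_ineq4)
  also have "\<dots> \<le> 2 * \<kappa>2 * \<bar>x - t\<bar> + \<bar>x - t\<bar> * \<kappa>0"
    using L2 rt by (intro add_mono mult_left_mono) auto
  finally have F1: "\<bar>x * D\<bar> \<le> (\<kappa>0 + 2 * \<kappa>2) * \<bar>x - t\<bar>" by (simp add: algebra_simps)
  have x0: "x \<ge> 0" using x by simp
  have "(sqrt x * \<bar>D\<bar>)^2 = (sqrt x)^2 * \<bar>D\<bar>^2" by (simp only: power_mult_distrib)
  also have "\<dots> = \<bar>D\<bar> * \<bar>x * D\<bar>" using x0 by (simp add: abs_mult power2_eq_square)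
  also have "\<dots> \<le> (2 * real k ^ 2 * \<kappa>0 * \<bar>x - t\<bar>) * ((\<kappa>0 + 2 * \<kappa>2) * \<bar>x - t\<bar>)"
    using L1 F1 k0 by (intro mult_mono) auto
  also have "\<dots> = (2 * \<kappa>0 * (\<kappa>0 + 2 * \<kappa>2)) * (real k * \<bar>x - t\<bar>)^2"
    by (simp add: power2_eq_square algebra_simps)
  also have "\<dots> = (2 * \<kappa>0 * sqrt (1/2 + \<kappa>2 / \<kappa>0) * real k * \<bar>x - t\<bar>)^2"
  proof -
    have s2: "(sqrt (1/2 + \<kappa>2 / \<kappa>0))^2 = 1/2 + \<kappa>2 / \<kappa>0"
      using k0 k2 by (intro real_sqrt_pow2) simp
    have e: "4 * \<kappa>0^2 * (1/2 + \<kappa>2 / \<kappa>0) = 2 * \<kappa>0 * (\<kappa>0 + 2 * \<kappa>2)"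
      using k0 by (simp add: field_simps power2_eq_square)
    have "(2 * \<kappa>0 * sqrt (1/2 + \<kappa>2 / \<kappa>0) * real k * \<bar>x - t\<bar>)^2
        = (4 * \<kappa>0^2 * (sqrt (1/2 + \<kappa>2 / \<kappa>0))^2) * (real k * \<bar>x - t\<bar>)^2"
      by (simp only: power_mult_distrib mult.assoc) simp
    also have "\<dots> = (2 * \<kappa>0 * (\<kappa>0 + 2 * \<kappa>2)) * (real k * \<bar>x - t\<bar>)^2"
      unfolding s2 e ..
    finally show ?thesis by simp
  qed
  finally have sq: "(sqrt x * \<bar>D\<bar>)^2 \<le> (2 * \<kappa>0 * sqrt (1/2 + \<kappa>2 / \<kappa>0) * real k * \<bar>x - t\<bar>)^2" .
  have "0 \<le> 2 * \<kappa>0 * sqrt (1/2 + \<kappa>2 / \<kappa>0) * real k * \<bar>x - t\<bar>"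
    using k0 k2 by simp
  hence F2: "sqrt x * \<bar>D\<bar> \<le> 2 * \<kappa>0 * sqrt (1/2 + \<kappa>2 / \<kappa>0) * real k * \<bar>x - t\<bar>"
    using sq by (rule power2_le_imp_le[rotated])
  show "\<bar>x * (poly (r k) x - poly (r k) t)\<bar> \<le> (\<kappa>0 + 2 * \<kappa>2) * \<bar>x - t\<bar>
         \<and> sqrt x * \<bar>poly (r k) x - poly (r k) t\<bar>
             \<le> 2 * \<kappa>0 * sqrt (1/2 + \<kappa>2 / \<kappa>0) * real k * \<bar>x - t\<bar>"
    using F1 F2 unfolding D_def by blast
qed


end
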